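(* Let $M\ge 2$ be an integer and $\varepsilon>0$. There exists a task set $\mathbf{T}$ (with $N=M^2-M+1$ tasks, all sharing one binary semaphore) such that, letting $OPT$ be the minimum makespan of $\mathbf{T}$ on $M$ processors over all feasible schedules, the following hold for every dependency graph $G^*$ of $\mathbf{T}$ with minimum critical path length: (i) every feasible schedule of $G^*$ on $M$ processors (under any paradigm, including global preemptive) has makespan at least $\left(2-\frac{2}{M}+\frac{1}{M^2}-\varepsilon\right)OPT$; (ii) every feasible semi-partitioned or partitioned schedule of $G^*$ on $M$ processors has makespan at least $\left(2-\frac{1}{M}-\varepsilon\right)OPT$. Hence the dependency graph approach, even with both steps solved optimally, has approximation ratio at least $2-\frac{2}{M}+\frac{1}{M^2}$ in general and at least $2-\frac{1}{M}$ under partitioned or semi-partitioned scheduling.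
   Context: Task model: there are $M$ identical processors and a set $\mathbf{T}$ of $N$ tasks. Each task $\tau_i$ releases exactly one job at time $0$, consisting of three subjobs that must be executed sequentially in this order: a first non-critical section of execution time $C_{i,1}\ge 0$, a critical section of execution time $A_{i,1}\ge 0$ guarded by a binary semaphore $\sigma_i\in\{s_1,\dots,s_z\}$, and a second non-critical section of execution time $C_{i,2}\ge 0$. A job may never execute on two processors at the same time. Critical sections guarded by the same semaphore must be executed mutually exclusively. The makespan of a schedule is the completion time of the last job. A global schedule may preempt and migrate arbitrarily; in a semi-partitioned schedule each subjob executes entirely on one processor; in a partitioned schedule all subjobs of a job execute on one processor. Dependency graph: a dependency graph $G$ of $\mathbf{T}$ is a directed graph whose vertices are the $3N$ subjobs $C_{i,1},A_{i,1},C_{i,2}$, weighted by their execution times, containing the edges $(C_{i,1},A_{i,1})$ and $(A_{i,1},C_{i,2})$ for every $i$, and, for each semaphore $s_k$ with $\mathbf{T}_k=\{\tau_i:\sigma_i=s_k\}$, a total order $\pi_k$ on $\mathbf{T}_k$ together with the edges $(A_{i,1},A_{j,1})$ whenever $\pi_k(\tau_i)=\pi_k(\tau_j)-1$ (no other edges). The length of a path is the sum of the weights of its vertices; $len(G)$ is the maximum length of a path in $G$. $G^*$ denotes a dependency graph minimizing $len(G)$. A feasible schedule of $G$ is a schedule of $\mathbf{T}$ in which every subjob starts only after all its predecessors in $G$ have completed. *)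

theory Defs
  imports Complex_Main
begin

text \<open>Subjobs of task i: first non-critical section, critical section,
  second non-critical section.\<close>
datatype subjob = Pre nat | Crit nat | Post nat

fun task_of :: "subjob \<Rightarrow> nat" where
  "task_of (Pre i) = i" | "task_of (Crit i) = i" | "task_of (Post i) = i"

text \<open>A task set: tasks 0 ..< ntasks; execution times C_{i,1}, A_{i,1}, C_{i,2};
  semaphore index of the critical section of each task.\<close>
record taskset =
  ntasks :: nat
  cpre   :: "nat \<Rightarrow> real"
  crit   :: "nat \<Rightarrow> real"
  cpost  :: "nat \<Rightarrow> real"
  sema   :: "nat \<Rightarrow> nat"

definition valid_taskset :: "taskset \<Rightarrow> bool" where
  "valid_taskset T \<longleftrightarrow>
     (\<forall>i < ntasks T. cpre T i \<ge> 0 \<and> crit T i \<ge> 0 \<and> cpost T i \<ge> 0)"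

fun wcet :: "taskset \<Rightarrow> subjob \<Rightarrow> real" where
  "wcet T (Pre i) = cpre T i" | "wcet T (Crit i) = crit T i" | "wcet T (Post i) = cpost T i"

definition subjobs :: "taskset \<Rightarrow> subjob set" where
  "subjobs T = {v. task_of v < ntasks T}"

text \<open>A schedule consists of a finite set of execution pieces (v, p, a, b):
  subjob v executes on processor p during the time interval [a, b), together
  with the start time and completion time of every subjob.\<close>
record schedule =
  pieces :: "(subjob \<times> nat \<times> real \<times> real) set"
  sstart :: "subjob \<Rightarrow> real"
  sfin   :: "subjob \<Rightarrow> real"

definition time_disjoint :: "real \<times> real \<Rightarrow> real \<times> real \<Rightarrow> bool" where
  "time_disjoint I J \<longleftrightarrow> snd I \<le> fst J \<or> snd J \<le> fst I"

definition valid_schedule :: "taskset \<Rightarrow> nat \<Rightarrow> schedule \<Rightarrow> bool" where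
  "valid_schedule T M S \<longleftrightarrow>
     finite (pieces S) \<and>
     (\<forall>(v,p,a,b) \<in> pieces S. v \<in> subjobs T \<and> p < M \<and> a < b
                              \<and> sstart S v \<le> a \<and> b \<le> sfin S v) \<and>
     (\<forall>v \<in> subjobs T. 0 \<le> sstart S v \<and> sstart S v \<le> sfin S v) \<and>
     \<comment> \<open>each subjob receives exactly its execution time\<close>
     (\<forall>v \<in> subjobs T. (\<Sum>(u,p,a,b) \<in> {x \<in> pieces S. fst x = v}. b - a) = wcet T v) \<and>
     \<comment> \<open>a processor executes at most one piece at a time\<close>
     (\<forall>(u,p,a,b) \<in> pieces S. \<forall>(u',p',a',b') \<in> pieces S.
        (u,p,a,b) \<noteq> (u',p',a',b') \<and> p = p' \<longrightarrow> time_disjoint (a,b) (a',b')) \<and>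
     \<comment> \<open>a job never executes on two processors at the same time\<close>
     (\<forall>(u,p,a,b) \<in> pieces S. \<forall>(u',p',a',b') \<in> pieces S.
        (u,p,a,b) \<noteq> (u',p',a',b') \<and> task_of u = task_of u' \<longrightarrow> time_disjoint (a,b) (a',b')) \<and>
     \<comment> \<open>subjobs of a job execute sequentially\<close>
     (\<forall>i < ntasks T. sfin S (Pre i) \<le> sstart S (Crit i) \<and> sfin S (Crit i) \<le> sstart S (Post i)) \<and>
     \<comment> \<open>mutual exclusion: the semaphore is held from start to completion of a critical section\<close>
     (\<forall>i < ntasks T. \<forall>j < ntasks T. i \<noteq> j \<and> sema T i = sema T j \<longrightarrow>
        time_disjoint (sstart S (Crit i), sfin S (Crit i)) (sstart S (Crit j), sfin S (Crit j)))"

definition makespan :: "taskset \<Rightarrow> schedule \<Rightarrow> real" where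
  "makespan T S = Max ((\<lambda>i. sfin S (Post i)) ` {..<ntasks T})"

definition semi_partitioned :: "schedule \<Rightarrow> bool" where
  "semi_partitioned S \<longleftrightarrow>
     (\<forall>(u,p,a,b) \<in> pieces S. \<forall>(u',p',a',b') \<in> pieces S. u = u' \<longrightarrow> p = p')"

definition partitioned :: "schedule \<Rightarrow> bool" where
  "partitioned S \<longleftrightarrow>
     (\<forall>(u,p,a,b) \<in> pieces S. \<forall>(u',p',a',b') \<in> pieces S. task_of u = task_of u' \<longrightarrow> p = p')"

definition OPT :: "taskset \<Rightarrow> nat \<Rightarrow> real" where
  "OPT T M = Inf (makespan T ` {S. valid_schedule T M S})"

text \<open>For each semaphore k, ord k lists the tasks using s_k in the chosen total order.\<close>
definition dep_graph_of :: "taskset \<Rightarrow> (nat \<Rightarrow> nat list) \<Rightarrow> (subjob \<times> subjob) set" where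
  "dep_graph_of T ord =
     {(Pre i, Crit i) | i. i < ntasks T} \<union> {(Crit i, Post i) | i. i < ntasks T} \<union>
     {(Crit (ord k ! j), Crit (ord k ! Suc j)) | k j. Suc j < length (ord k)}"

definition is_dep_graph :: "taskset \<Rightarrow> (subjob \<times> subjob) set \<Rightarrow> bool" where
  "is_dep_graph T G \<longleftrightarrow>
     (\<exists>ord. (\<forall>k. distinct (ord k) \<and> set (ord k) = {i. i < ntasks T \<and> sema T i = k})
            \<and> G = dep_graph_of T ord)"

definition is_path :: "taskset \<Rightarrow> (subjob \<times> subjob) set \<Rightarrow> subjob list \<Rightarrow> bool" where
  "is_path T G p \<longleftrightarrow> p \<noteq> [] \<and> distinct p \<and> set p \<subseteq> subjobs T \<and>
     (\<forall>j. Suc j < length p \<longrightarrow> (p ! j, p ! Suc j) \<in> G)"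

definition path_length :: "taskset \<Rightarrow> subjob list \<Rightarrow> real" where
  "path_length T p = sum_list (map (wcet T) p)"

definition len :: "taskset \<Rightarrow> (subjob \<times> subjob) set \<Rightarrow> real" where
  "len T G = Max (path_length T ` {p. is_path T G p})"

definition is_opt_dep_graph :: "taskset \<Rightarrow> (subjob \<times> subjob) set \<Rightarrow> bool" where
  "is_opt_dep_graph T G \<longleftrightarrow> is_dep_graph T G \<and> (\<forall>G'. is_dep_graph T G' \<longrightarrow> len T G \<le> len T G')"

definition feasible_for_graph :: "taskset \<Rightarrow> nat \<Rightarrow> (subjob \<times> subjob) set \<Rightarrow> schedule \<Rightarrow> bool" where
  "feasible_for_graph T M G S \<longleftrightarrow> valid_schedule T M S \<and>
     (\<forall>(u,v) \<in> G. sfin S u \<le> sstart S v)"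

end

theory Submission
  imports Defs
begin

lemma vs_fin: "valid_schedule T M S \<Longrightarrow> finite (pieces S)"
  unfolding valid_schedule_def by (elim conjE) assumption

lemma vs_pc: "valid_schedule T M S \<Longrightarrow> \<forall>(v,p,a,b) \<in> pieces S. v \<in> subjobs T \<and> p < M \<and> a < b
                              \<and> sstart S v \<le> a \<and> b \<le> sfin S v"
  unfolding valid_schedule_def by (elim conjE) assumption

lemma vs_ss: "valid_schedule T M S \<Longrightarrow> \<forall>v \<in> subjobs T. 0 \<le> sstart S v \<and> sstart S v \<le> sfin S v"
  unfolding valid_schedule_def by (elim conjE) assumption

lemma vs_sum: "valid_schedule T M S \<Longrightarrow> \<forall>v \<in> subjobs T. (\<Sum>(u,p,a,b) \<in> {x \<in> pieces S. fst x = v}. b - a) = wcet T v"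
  unfolding valid_schedule_def by (elim conjE) assumption

lemma vs_proc: "valid_schedule T M S \<Longrightarrow> \<forall>(u,p,a,b) \<in> pieces S. \<forall>(u',p',a',b') \<in> pieces S.
        (u,p,a,b) \<noteq> (u',p',a',b') \<and> p = p' \<longrightarrow> time_disjoint (a,b) (a',b')"
  unfolding valid_schedule_def by (elim conjE) assumption

lemma vs_task: "valid_schedule T M S \<Longrightarrow> \<forall>(u,p,a,b) \<in> pieces S. \<forall>(u',p',a',b') \<in> pieces S.
        (u,p,a,b) \<noteq> (u',p',a',b') \<and> task_of u = task_of u' \<longrightarrow> time_disjoint (a,b) (a',b')"
  unfolding valid_schedule_def by (elim conjE) assumption

lemma vs_seq: "valid_schedule T M S \<Longrightarrow> \<forall>i < ntasks T. sfin S (Pre i) \<le> sstart S (Crit i) \<and> sfin S (Crit i) \<le> sstart S (Post i)"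
  unfolding valid_schedule_def by (elim conjE) assumption

lemma vs_mutex: "valid_schedule T M S \<Longrightarrow> \<forall>i < ntasks T. \<forall>j < ntasks T. i \<noteq> j \<and> sema T i = sema T j \<longrightarrow>
        time_disjoint (sstart S (Crit i), sfin S (Crit i)) (sstart S (Crit j), sfin S (Crit j))"
  unfolding valid_schedule_def by (elim conjE) assumption

lemma intervals_sum_le:
  fixes st en :: "'x \<Rightarrow> real"
  assumes "finite X"
  shows "\<And>hi. lo \<le> hi \<Longrightarrow> (\<forall>x\<in>X. lo \<le> st x \<and> st x < en x \<and> en x \<le> hi) \<Longrightarrow>
     (\<forall>x\<in>X. \<forall>y\<in>X. x \<noteq> y \<longrightarrow> en x \<le> st y \<or> en y \<le> st x) \<Longrightarrow>
     (\<Sum>x\<in>X. en x - st x) \<le> hi - lo"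
  using assms
proof (induction X rule: finite_ranking_induct[where f = st])
  case empty
  then show ?case by simp
next
  case (insert x S)
  show ?case
  proof (cases "x \<in> S")
    case True
    then show ?thesis using insert by (simp add: insert_absorb)
  next
    case False
    have sub: "\<forall>y\<in>S. lo \<le> st y \<and> st y < en y \<and> en y \<le> st x"
    proof
      fix y assume y: "y \<in> S"
      have "y \<noteq> x" using y False by auto
      then have "en x \<le> st y \<or> en y \<le> st x" using insert.prems(3) y by auto
      moreover have "st y \<le> st x" using insert.hyps(2) y by auto
      moreover have "st x < en x" using insert.prems(2) by auto
      ultimately show "lo \<le> st y \<and> st y < en y \<and> en y \<le> st x" using insert.prems(2) y by auto
    qed
    have "(\<Sum>y\<in>S. en y - st y) \<le> st x - lo"
      using insert.IH[of "st x"] sub insert.prems by auto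
    moreover have "(\<Sum>y\<in>insert x S. en y - st y) = (en x - st x) + (\<Sum>y\<in>S. en y - st y)"
      using False insert.hyps(1) by simp
    ultimately show ?thesis using insert.prems(2) by auto
  qed
qed

abbreviation plen :: "subjob \<times> nat \<times> real \<times> real \<Rightarrow> real" where
  "plen \<equiv> \<lambda>(u,p,a,b). b - a"

lemma pieces_sum_le:
  assumes V: "valid_schedule T M S" and Z: "Z \<subseteq> pieces S" and lohi: "lo \<le> hi"
    and in_win: "\<forall>(u,p,a,b)\<in>Z. lo \<le> a \<and> b \<le> hi"
    and disj: "\<forall>x\<in>Z. \<forall>y\<in>Z. x \<noteq> y \<longrightarrow> time_disjoint (snd (snd x)) (snd (snd y))"
  shows "sum plen Z \<le> hi - lo"
proof -
  have fin: "finite Z" using vs_fin[OF V] Z by (auto intro: finite_subset)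
  have ab: "\<forall>(u,p,a,b)\<in>Z. a < b" using vs_pc[OF V] Z by fast
  have "(\<Sum>x\<in>Z. snd (snd (snd x)) - fst (snd (snd x))) \<le> hi - lo"
    apply (rule intervals_sum_le[OF fin lohi])
    using in_win ab apply fastforce
    using disj unfolding time_disjoint_def by auto
  moreover have "sum plen Z = (\<Sum>x\<in>Z. snd (snd (snd x)) - fst (snd (snd x)))"
    by (rule sum.cong) auto
  ultimately show ?thesis by simp
qed

lemma task_disj:
  assumes V: "valid_schedule T M S" and xy: "x \<in> pieces S" "y \<in> pieces S" "x \<noteq> y"
    and same: "task_of (fst x) = task_of (fst y)"
  shows "time_disjoint (snd (snd x)) (snd (snd y))"
proof -
  obtain u p a b where x: "x = (u, p, a, b)" by (cases x) auto
  obtain u' p' a' b' where y: "y = (u', p', a', b')" by (cases y) auto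
  have H: "\<forall>(u,p,a,b) \<in> pieces S. \<forall>(u',p',a',b') \<in> pieces S.
        (u,p,a,b) \<noteq> (u',p',a',b') \<and> task_of u = task_of u' \<longrightarrow> time_disjoint (a,b) (a',b')"
    using vs_task[OF V] by blast
  have "time_disjoint (a,b) (a',b')"
    using bspec[OF H xy(1)[unfolded x]] xy(2,3) same unfolding x y
    by (simp add: Ball_def)
  then show ?thesis unfolding x y by simp
qed

lemma proc_disj:
  assumes V: "valid_schedule T M S" and xy: "x \<in> pieces S" "y \<in> pieces S" "x \<noteq> y"
    and same: "fst (snd x) = fst (snd y)"
  shows "time_disjoint (snd (snd x)) (snd (snd y))"
proof -
  obtain u p a b where x: "x = (u, p, a, b)" by (cases x) auto
  obtain u' p' a' b' where y: "y = (u', p', a', b')" by (cases y) auto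
  have H: "\<forall>(u,p,a,b) \<in> pieces S. \<forall>(u',p',a',b') \<in> pieces S.
        (u,p,a,b) \<noteq> (u',p',a',b') \<and> p = p' \<longrightarrow> time_disjoint (a,b) (a',b')"
    using vs_proc[OF V] by blast
  have "time_disjoint (a,b) (a',b')"
    using bspec[OF H xy(1)[unfolded x]] xy(2,3) same unfolding x y
    by (simp add: Ball_def)
  then show ?thesis unfolding x y by simp
qed

lemma wcet_le:
  assumes V: "valid_schedule T M S" and v: "v \<in> subjobs T"
  shows "wcet T v \<le> sfin S v - sstart S v"
proof -
  let ?Z = "{x \<in> pieces S. fst x = v}"
  have "sum plen ?Z = wcet T v" using vs_sum[OF V] v by blast
  moreover have "sum plen ?Z \<le> sfin S v - sstart S v"
  proof (rule pieces_sum_le[OF V])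
    show "sstart S v \<le> sfin S v" using vs_ss[OF V] v by blast
    have H: "\<forall>(u,p,a,b) \<in> pieces S. u \<in> subjobs T \<and> p < M \<and> a < b \<and> sstart S u \<le> a \<and> b \<le> sfin S u"
      using vs_pc[OF V] by blast
    show "\<forall>(u,p,a,b)\<in>?Z. sstart S v \<le> a \<and> b \<le> sfin S v"
    proof (intro ballI)
      fix x assume x: "x \<in> ?Z"
      obtain u p a b where xe: "x = (u, p, a, b)" by (cases x) auto
      have uv: "u = v" and xin: "(u, p, a, b) \<in> pieces S" using x xe by auto
      have "sstart S u \<le> a \<and> b \<le> sfin S u" using bspec[OF H xin] by simp
      then show "case x of (u, p, a, b) \<Rightarrow> sstart S v \<le> a \<and> b \<le> sfin S v" using xe uv by simp
    qed
    show "\<forall>x\<in>?Z. \<forall>y\<in>?Z. x \<noteq> y \<longrightarrow> time_disjoint (snd (snd x)) (snd (snd y))"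
      using task_disj[OF V] by auto
  qed auto
  ultimately show ?thesis by simp
qed

lemma sum_wcet_pieces:
  assumes V: "valid_schedule T M S" and Y: "finite Y" "Y \<subseteq> subjobs T"
  shows "(\<Sum>y\<in>Y. wcet T y) = sum plen {x \<in> pieces S. fst x \<in> Y}"
proof -
  have fin: "finite (pieces S)" using vs_fin[OF V] .
  have "sum plen {x \<in> pieces S. fst x \<in> Y} =
        (\<Sum>y\<in>Y. sum plen {x. x \<in> {x \<in> pieces S. fst x \<in> Y} \<and> fst x = y})"
    by (rule sum.group[symmetric]) (use fin Y in auto)
  also have "\<dots> = (\<Sum>y\<in>Y. wcet T y)"
  proof (rule sum.cong)
    fix y assume "y \<in> Y"
    then have "{x. x \<in> {x \<in> pieces S. fst x \<in> Y} \<and> fst x = y} = {x \<in> pieces S. fst x = y}" by auto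
    then show "sum plen {x. x \<in> {x \<in> pieces S. fst x \<in> Y} \<and> fst x = y} = wcet T y"
      using vs_sum[OF V] \<open>y \<in> Y\<close> Y by auto
  qed simp
  finally show ?thesis by simp
qed

definition TT :: "nat \<Rightarrow> real \<Rightarrow> taskset" where
  "TT M d = \<lparr>ntasks = M^2 - M + 1,
             cpre = (\<lambda>i. if i = 0 then 1 + real (M^2 - M) * d else 1),
             crit = (\<lambda>i. if i = 0 then real M - 1 else d),
             cpost = (\<lambda>_. 0), sema = (\<lambda>_. 0)\<rparr>"

lemma subjobs_eq: "subjobs T = Pre ` {..<ntasks T} \<union> Crit ` {..<ntasks T} \<union> Post ` {..<ntasks T}"
  unfolding subjobs_def
  apply auto
  subgoal for x by (cases x) auto
  done

lemma finite_subjobs: "finite (subjobs T)"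
  unfolding subjobs_eq by simp

lemma finite_paths: "finite {p. is_path T G p}"
proof (rule finite_subset)
  show "{p. is_path T G p} \<subseteq> {xs. set xs \<subseteq> subjobs T \<and> length xs \<le> card (subjobs T)}"
  proof (rule subsetI)
    fix p assume "p \<in> {p. is_path T G p}"
    then have d: "distinct p" and s: "set p \<subseteq> subjobs T" by (auto simp: is_path_def)
    have "length p \<le> card (subjobs T)" using distinct_card[OF d] card_mono[OF finite_subjobs s] by simp
    then show "p \<in> {xs. set xs \<subseteq> subjobs T \<and> length xs \<le> card (subjobs T)}" using s by simp
  qed
  show "finite {xs. set xs \<subseteq> subjobs T \<and> length xs \<le> card (subjobs T)}"
    by (rule finite_lists_length_le[OF finite_subjobs])
qed

lemma len_ge: "is_path T G p \<Longrightarrow> path_length T p \<le> len T G"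
  unfolding len_def by (rule Max_ge) (use finite_paths in auto)

definition ordL :: "nat \<Rightarrow> nat \<Rightarrow> nat list" where
  "ordL N k = (if k = 0 then [1..<N] @ [0] else [])"

lemma ordL_nth: "j < N - 1 \<Longrightarrow> ordL N 0 ! j = Suc j"
  unfolding ordL_def by (simp add: nth_append)

lemma ordL_len: "N \<ge> 1 \<Longrightarrow> length (ordL N 0) = N"
  unfolding ordL_def by simp

lemma GL_edges:
  assumes "(u, v) \<in> dep_graph_of T (ordL (ntasks T))" "ntasks T \<ge> 1"
  shows "(\<exists>i<ntasks T. u = Pre i \<and> v = Crit i) \<or> (\<exists>i<ntasks T. u = Crit i \<and> v = Post i) \<or>
         (\<exists>i j. u = Crit i \<and> v = Crit j \<and> i \<noteq> 0)"
proof -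
  let ?o = "ordL (ntasks T)"
  consider (a) "\<exists>i<ntasks T. u = Pre i \<and> v = Crit i" | (b) "\<exists>i<ntasks T. u = Crit i \<and> v = Post i"
    | (c) k j where "u = Crit (?o k ! j)" "v = Crit (?o k ! Suc j)" "Suc j < length (?o k)"
    using assms(1) unfolding dep_graph_of_def by blast
  then show ?thesis
  proof cases
    case (c k j)
    have "k = 0" using c(3) by (auto simp: ordL_def split: if_splits)
    then have "j < ntasks T - 1" using c(3) by (simp add: ordL_def)
    then have "?o k ! j = Suc j" using ordL_nth[of j "ntasks T"] \<open>k = 0\<close> by simp
    then show ?thesis using c by auto
  qed auto
qed

lemma is_dep_GL:
  assumes "\<forall>i. sema T i = 0" "ntasks T \<ge> 1"
  shows "is_dep_graph T (dep_graph_of T (ordL (ntasks T)))"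
  unfolding is_dep_graph_def
  apply (rule exI[of _ "ordL (ntasks T)"])
  using assms by (auto simp: ordL_def)

lemma TT_simps:
  "ntasks (TT M d) = Suc (M^2 - M)"
  "cpre (TT M d) i = (if i = 0 then 1 + real (M^2 - M) * d else 1)"
  "crit (TT M d) i = (if i = 0 then real M - 1 else d)"
  "cpost (TT M d) i = 0" "sema (TT M d) i = 0"
  by (simp_all add: TT_def)

lemma TT_valid: "M \<ge> 2 \<Longrightarrow> d \<ge> 0 \<Longrightarrow> valid_taskset (TT M d)"
  unfolding valid_taskset_def TT_simps by auto

lemma wcet_nonneg: "M \<ge> 2 \<Longrightarrow> d \<ge> 0 \<Longrightarrow> wcet (TT M d) v \<ge> 0"
  by (cases v) (auto simp: TT_simps)

lemma sum_CP:
  "sum (wcet (TT M d)) (Crit ` {..<Suc (M^2 - M)} \<union> Post ` {..<Suc (M^2 - M)})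
     = real M - 1 + real (M^2 - M) * d"
proof -
  have "sum (wcet (TT M d)) (Crit ` {..<Suc (M^2 - M)} \<union> Post ` {..<Suc (M^2 - M)})
      = sum (wcet (TT M d)) (Crit ` {..<Suc (M^2 - M)}) + sum (wcet (TT M d)) (Post ` {..<Suc (M^2 - M)})"
    by (rule sum.union_disjoint) auto
  also have "sum (wcet (TT M d)) (Post ` {..<Suc (M^2 - M)}) = 0"
    by (rule sum.neutral) (auto simp: TT_simps)
  also have "sum (wcet (TT M d)) (Crit ` {..<Suc (M^2 - M)}) = (\<Sum>i<Suc (M^2 - M). crit (TT M d) i)"
    by (simp add: sum.reindex inj_on_def del: sum.lessThan_Suc)
  also have "\<dots> = real M - 1 + real (M^2 - M) * d"
    by (simp add: sum.lessThan_Suc_shift TT_simps del: sum.lessThan_Suc)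
  finally show ?thesis by simp
qed

lemma path_GL_bound:
  assumes M: "M \<ge> 2" and d: "d \<ge> 0"
    and P: "is_path (TT M d) (dep_graph_of (TT M d) (ordL (ntasks (TT M d)))) p"
  shows "path_length (TT M d) p \<le> 1 + real (M^2 - M) * d + (real M - 1)"
proof -
  let ?T = "TT M d"
  let ?N = "Suc (M^2 - M)"
  let ?G = "dep_graph_of ?T (ordL (ntasks ?T))"
  let ?CP = "Crit ` {..<?N} \<union> Post ` {..<?N}"
  have ne: "p \<noteq> []" and dist: "distinct p" and sj: "set p \<subseteq> subjobs ?T"
    and edge: "\<And>j. Suc j < length p \<Longrightarrow> (p ! j, p ! Suc j) \<in> ?G"
    using P unfolding is_path_def by auto
  have N1: "ntasks ?T \<ge> 1" by (simp add: TT_simps)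
  have E: "\<And>u v. (u, v) \<in> ?G \<Longrightarrow> (\<exists>i<?N. u = Pre i \<and> v = Crit i) \<or> (\<exists>i<?N. u = Crit i \<and> v = Post i) \<or>
         (\<exists>i j. u = Crit i \<and> v = Crit j \<and> i \<noteq> 0)"
    using GL_edges[OF _ N1] unfolding TT_simps(1) .
  have noPre: "\<And>k i. 0 < k \<Longrightarrow> k < length p \<Longrightarrow> p ! k \<noteq> Pre i"
  proof
    fix k i assume k: "0 < k" "k < length p" and pk: "p ! k = Pre i"
    then obtain j where j: "k = Suc j" by (cases k) auto
    have "(p ! j, p ! k) \<in> ?G" using edge[of j] j k by simp
    then show False using E pk by fastforce
  qed
  have sjT: "\<And>x. x \<in> set p \<Longrightarrow> x \<in> Pre ` {..<?N} \<or> x \<in> ?CP"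
  proof -
    have "subjobs ?T = Pre ` {..<?N} \<union> Crit ` {..<?N} \<union> Post ` {..<?N}"
      by (simp only: subjobs_eq TT_simps(1))
    then show "\<And>x. x \<in> set p \<Longrightarrow> x \<in> Pre ` {..<?N} \<or> x \<in> ?CP" using sj by blast
  qed
  have rest: "set p - {p ! 0} \<subseteq> ?CP"
  proof
    fix x assume x: "x \<in> set p - {p ! 0}"
    then obtain k where k: "k < length p" "p ! k = x" by (auto simp: in_set_conv_nth)
    have "k \<noteq> 0"
    proof
      assume "k = 0" then show False using k x by simp
    qed
    then show "x \<in> ?CP" using sjT[of x] noPre[of k] k x by auto
  qed
  have wnn: "\<And>v. wcet ?T v \<ge> 0" using wcet_nonneg[OF M d] .
  have PL: "path_length ?T p = sum (wcet ?T) (set p)"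
    unfolding path_length_def using dist by (simp add: sum_list_distinct_conv_sum_set)
  have p0: "p ! 0 \<in> set p" using ne by simp
  have split: "sum (wcet ?T) (set p) = wcet ?T (p ! 0) + sum (wcet ?T) (set p - {p ! 0})"
    using p0 by (simp add: sum.remove)
  have restle: "sum (wcet ?T) (set p - {p ! 0}) \<le> real M - 1 + real (M^2 - M) * d"
    using sum_mono2[OF _ rest, of "wcet ?T"] wnn sum_CP[of M d] by simp
  show ?thesis
  proof (cases "p ! 0 = Pre 0")
    case True
    have l2: "\<And>k. k < length p \<Longrightarrow> p ! k \<in> {Pre 0, Crit 0, Post 0}"
    proof -
      fix k assume k: "k < length p"
      have s1: "1 < length p \<Longrightarrow> p ! 1 = Crit 0"
        using edge[of 0] True E by fastforce
      have s2: "2 < length p \<Longrightarrow> p ! 2 = Post 0"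
        using edge[of 1] s1 E by (fastforce simp: numeral_2_eq_2)
      have s3: "3 < length p \<Longrightarrow> False"
        using edge[of 2] s2 E by (fastforce simp: numeral_3_eq_3)
      have "k = 0 \<or> k = 1 \<or> k = 2" using k s3 by (cases "3 < length p") auto
      then show "p ! k \<in> {Pre 0, Crit 0, Post 0}" using True s1 s2 k by auto
    qed
    have sub3: "set p \<subseteq> {Pre 0, Crit 0, Post 0}" using l2 by (metis in_set_conv_nth subsetI)
    have "sum (wcet ?T) (set p) \<le> sum (wcet ?T) {Pre 0, Crit 0, Post 0}"
      by (rule sum_mono2[OF _ sub3]) (use wnn in auto)
    also have "\<dots> = 1 + real (M^2 - M) * d + (real M - 1)" by (simp add: TT_simps)
    finally show ?thesis using PL by simp
  next
    case False
    show ?thesis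
    proof (cases "\<exists>i. p ! 0 = Pre i")
      case True
      then obtain i where "p ! 0 = Pre i" by auto
      then have "wcet ?T (p ! 0) = 1" using False by (simp add: TT_simps)
      then show ?thesis using PL split restle by simp
    next
      case F2: False
      have subc: "set p \<subseteq> ?CP"
      proof
        fix x assume x: "x \<in> set p"
        show "x \<in> ?CP"
        proof (cases "x = p ! 0")
          case True
          then show ?thesis using sjT[OF x] F2 by auto
        next
          case False
          then show ?thesis using rest x by auto
        qed
      qed
      have "sum (wcet ?T) (set p) \<le> sum (wcet ?T) ?CP"
        by (rule sum_mono2[OF _ subc]) (use wnn in auto)
      then show ?thesis using PL sum_CP[of M d] d by simp
    qed
  qed
qed

lemma len_GL_le:
  assumes M: "M \<ge> 2" and d: "d \<ge> 0"
  shows "len (TT M d) (dep_graph_of (TT M d) (ordL (ntasks (TT M d)))) \<le> 1 + real (M^2 - M) * d + (real M - 1)"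
  unfolding len_def
proof (subst Max_le_iff)
  let ?T = "TT M d" let ?G = "dep_graph_of (TT M d) (ordL (ntasks (TT M d)))"
  show "finite (path_length ?T ` {p. is_path ?T ?G p})" using finite_paths by simp
  have "is_path ?T ?G [Pre 0]" unfolding is_path_def subjobs_def by (simp add: TT_simps)
  then show "path_length ?T ` {p. is_path ?T ?G p} \<noteq> {}" by blast
  show "\<forall>a\<in>path_length ?T ` {p. is_path ?T ?G p}. a \<le> 1 + real (M^2 - M) * d + (real M - 1)"
    using path_GL_bound[OF M d] by blast
qed

lemma opt_last:
  assumes M: "M \<ge> 2" and d: "d > 0" and opt: "is_opt_dep_graph (TT M d) G"
  shows "\<exists>ord. G = dep_graph_of (TT M d) ord \<and> distinct (ord 0) \<and> set (ord 0) = {..<Suc (M^2 - M)}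
            \<and> length (ord 0) = Suc (M^2 - M) \<and> ord 0 ! (M^2 - M) = 0"
proof -
  let ?T = "TT M d" let ?N = "Suc (M^2 - M)"
  let ?GL = "dep_graph_of ?T (ordL (ntasks ?T))"
  obtain ord where ord: "\<forall>k. distinct (ord k) \<and> set (ord k) = {i. i < ntasks ?T \<and> sema ?T i = k}"
    and G: "G = dep_graph_of ?T ord"
    using opt unfolding is_opt_dep_graph_def is_dep_graph_def by blast
  have dist: "distinct (ord 0)" using ord by blast
  have set0: "set (ord 0) = {..<?N}" using ord by (auto simp: TT_simps)
  have len0: "length (ord 0) = ?N" using distinct_card[OF dist] set0 by simp
  have "0 \<in> set (ord 0)" using set0 by simp
  then obtain j where j0: "j < length (ord 0)" "ord 0 ! j = 0" by (auto simp: in_set_conv_nth)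
  then have j: "j < ?N" "ord 0 ! j = 0" using len0 by auto
  have "\<not> Suc j < ?N"
  proof
    assume sj: "Suc j < ?N"
    let ?k = "ord 0 ! Suc j"
    have k0: "?k \<noteq> 0" using nth_eq_iff_index_eq[OF dist, of "Suc j" j] sj j len0 by simp
    have "?k \<in> set (ord 0)" using sj len0 by simp
    then have kN: "?k < ?N" using set0 by simp
    let ?p = "[Pre 0, Crit 0, Crit ?k]"
    have "(Pre 0, Crit 0) \<in> {(Pre i, Crit i) | i. i < ntasks ?T}" by (auto simp: TT_simps)
    then have e1: "(Pre 0, Crit 0) \<in> G" unfolding G dep_graph_of_def by blast
    have "(Crit (ord 0 ! j), Crit (ord 0 ! Suc j)) \<in> {(Crit (ord k ! j), Crit (ord k ! Suc j)) | k j. Suc j < length (ord k)}"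
      unfolding mem_Collect_eq using sj len0 by (intro exI[of _ 0] exI[of _ j]) simp
    then have e2: "(Crit 0, Crit ?k) \<in> G" unfolding G dep_graph_of_def using j by simp
    have edges: "\<forall>jj. Suc jj < length ?p \<longrightarrow> (?p ! jj, ?p ! Suc jj) \<in> G"
    proof (intro allI impI)
      fix jj assume "Suc jj < length ?p"
      then have "jj = 0 \<or> jj = 1" by auto
      then show "(?p ! jj, ?p ! Suc jj) \<in> G" using e1 e2 by auto
    qed
    have "set ?p \<subseteq> subjobs ?T" using kN unfolding subjobs_def by (simp add: TT_simps)
    then have P: "is_path ?T G ?p"
      unfolding is_path_def using k0 edges by simp
    have "path_length ?T ?p = 1 + real (M^2 - M) * d + (real M - 1) + d"
      unfolding path_length_def using k0 by (simp add: TT_simps)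
    moreover have "path_length ?T ?p \<le> len ?T G" by (rule len_ge[OF P])
    moreover have "len ?T G \<le> len ?T ?GL"
      using opt is_dep_GL[of ?T] unfolding is_opt_dep_graph_def by (simp add: TT_simps)
    moreover have "len ?T ?GL \<le> 1 + real (M^2 - M) * d + (real M - 1)"
      using len_GL_le[OF M] d by simp
    ultimately show False using d by simp
  qed
  then have "j = M^2 - M" using j by simp
  then show ?thesis using G dist set0 len0 j by blast
qed

lemma chain:
  assumes F: "feasible_for_graph T M G S" and G: "G = dep_graph_of T ord"
    and L: "length (ord 0) = Suc n" and sub: "set (ord 0) \<subseteq> {..<ntasks T}"
  shows "j + Suc m = n \<Longrightarrow> sfin S (Crit (ord 0 ! j)) \<le> sstart S (Crit (ord 0 ! n))"
proof (induction m arbitrary: j)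
  have V: "valid_schedule T M S" using F unfolding feasible_for_graph_def by blast
  have edge: "\<And>j. Suc j < Suc n \<Longrightarrow> sfin S (Crit (ord 0 ! j)) \<le> sstart S (Crit (ord 0 ! Suc j))"
  proof -
    fix j assume "Suc j < Suc n"
    then have "(Crit (ord 0 ! j), Crit (ord 0 ! Suc j)) \<in> {(Crit (ord k ! j), Crit (ord k ! Suc j)) | k j. Suc j < length (ord k)}"
      unfolding mem_Collect_eq using \<open>Suc j < Suc n\<close> L by (intro exI[of _ 0] exI[of _ j]) simp
    then have "(Crit (ord 0 ! j), Crit (ord 0 ! Suc j)) \<in> G" unfolding G dep_graph_of_def by blast
    then show "sfin S (Crit (ord 0 ! j)) \<le> sstart S (Crit (ord 0 ! Suc j))"
      using F unfolding feasible_for_graph_def by blast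
  qed
  {
    case 0
    then show ?case using edge[of j] by simp
  next
    case (Suc m)
    have "sfin S (Crit (ord 0 ! j)) \<le> sstart S (Crit (ord 0 ! Suc j))" using edge[of j] Suc.prems by simp
    also have "\<dots> \<le> sfin S (Crit (ord 0 ! Suc j))"
    proof -
      have "ord 0 ! Suc j \<in> set (ord 0)" using Suc.prems L by simp
      then have "Crit (ord 0 ! Suc j) \<in> subjobs T" using sub unfolding subjobs_def by auto
      then show ?thesis using vs_ss[OF V] by blast
    qed
    also have "\<dots> \<le> sstart S (Crit (ord 0 ! n))" using Suc.IH[of "Suc j"] Suc.prems by simp
    finally show ?case .
  }
qed

lemma pre_before:
  assumes M: "M \<ge> 2" and d: "d > 0" and opt: "is_opt_dep_graph (TT M d) G"
    and F: "feasible_for_graph (TT M d) M G S"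
  shows "\<forall>i < Suc (M^2 - M). sfin S (Pre i) \<le> sstart S (Crit 0)"
proof (intro allI impI)
  let ?T = "TT M d" let ?n = "M^2 - M"
  fix i assume i: "i < Suc ?n"
  have V: "valid_schedule ?T M S" using F unfolding feasible_for_graph_def by blast
  obtain ord where G: "G = dep_graph_of ?T ord" and dist: "distinct (ord 0)"
    and set0: "set (ord 0) = {..<Suc ?n}" and L: "length (ord 0) = Suc ?n" and last: "ord 0 ! ?n = 0"
    using opt_last[OF M d opt] by blast
  have seq: "sfin S (Pre i) \<le> sstart S (Crit i)" using vs_seq[OF V] i by (simp add: TT_simps)
  show "sfin S (Pre i) \<le> sstart S (Crit 0)"
  proof (cases "i = 0")
    case True then show ?thesis using seq by simp
  next
    case False
    have "i \<in> set (ord 0)" using set0 i by simp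
    then obtain j where j0: "j < length (ord 0)" "ord 0 ! j = i" by (auto simp: in_set_conv_nth)
    then have j: "j < Suc ?n" "ord 0 ! j = i" using L by auto
    have "j \<noteq> ?n" using j last False by auto
    then have "j < ?n" using j by simp
    then obtain m where "?n = Suc (j + m)" using less_imp_Suc_add by blast
    then have m: "j + Suc m = ?n" by simp
    have "sfin S (Crit i) \<le> sstart S (Crit 0)"
      using chain[OF F G L, of j m] m j last set0 by (simp add: TT_simps)
    moreover have "sstart S (Crit i) \<le> sfin S (Crit i)"
      using vs_ss[OF V] i unfolding subjobs_def by (simp add: TT_simps)
    ultimately show ?thesis using seq by simp
  qed
qed

definition sst :: "nat \<Rightarrow> real \<Rightarrow> subjob \<Rightarrow> real" where
  "sst M d v = (case v of
      Pre i \<Rightarrow> (if i = 0 then 0 else real ((i - 1) mod M))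
    | Crit i \<Rightarrow> (if i = 0 then 1 + real (M^2 - M) * d else real M + real (M^2 - M) * d + (real i - 1) * d)
    | Post i \<Rightarrow> real M + real (M^2 - M) * d + real i * d)"

definition sfn :: "nat \<Rightarrow> real \<Rightarrow> subjob \<Rightarrow> real" where
  "sfn M d v = (case v of
      Pre i \<Rightarrow> (if i = 0 then 1 + real (M^2 - M) * d else real ((i - 1) mod M) + 1)
    | Crit i \<Rightarrow> real M + real (M^2 - M) * d + real i * d
    | Post i \<Rightarrow> real M + real (M^2 - M) * d + real i * d)"

definition prc :: "nat \<Rightarrow> subjob \<Rightarrow> nat" where
  "prc M v = (case v of Pre i \<Rightarrow> (if i = 0 then 0 else 1 + (i - 1) div M) | _ \<Rightarrow> 0)"

definition VP :: "nat \<Rightarrow> subjob set" where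
  "VP M = Pre ` {..<Suc (M^2 - M)} \<union> Crit ` {..<Suc (M^2 - M)}"

definition S0 :: "nat \<Rightarrow> real \<Rightarrow> schedule" where
  "S0 M d = \<lparr>pieces = (\<lambda>v. (v, prc M v, sst M d v, sfn M d v)) ` VP M, sstart = sst M d, sfin = sfn M d\<rparr>"

lemma S0_valid:
  assumes M: "M \<ge> 2" and d: "d > 0"
  shows "valid_schedule (TT M d) M (S0 M d)"
proof -
  let ?T = "TT M d" let ?n = "M^2 - M" let ?N = "Suc (M^2 - M)"
  have Mr: "real M \<ge> 2" using M by simp
  have nge: "real ?n * d \<ge> 0" using d by simp
  have modle: "\<And>x. real (x mod M) + 1 \<le> real M"
  proof -
    fix x :: nat
    have "x mod M < M" using M by simp
    then have "x mod M + 1 \<le> M" by simp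
    then show "real (x mod M) + 1 \<le> real M" by (metis of_nat_1 of_nat_add of_nat_le_iff)
  qed
  have cpos: "0 < 1 + real ?n * d" using nge by linarith
  have sj: "subjobs ?T = Pre ` {..<?N} \<union> Crit ` {..<?N} \<union> Post ` {..<?N}"
    by (simp only: subjobs_eq TT_simps(1))
  have len: "\<And>v. v \<in> VP M \<Longrightarrow> sfn M d v - sst M d v = wcet ?T v"
    unfolding VP_def by (auto simp: sst_def sfn_def TT_simps algebra_simps)
  have pos: "\<And>v. v \<in> VP M \<Longrightarrow> sst M d v < sfn M d v"
    unfolding VP_def using d M nge by (auto simp: sst_def sfn_def TT_simps cpos)
  have nn: "\<And>v. 0 \<le> sst M d v \<and> sst M d v \<le> sfn M d v"
  proof -
    fix v show "0 \<le> sst M d v \<and> sst M d v \<le> sfn M d v"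
      using d Mr nge by (cases v) (auto simp: sst_def sfn_def)
  qed
  have prcM: "\<And>v. v \<in> VP M \<Longrightarrow> prc M v < M"
  proof -
    fix v assume v: "v \<in> VP M"
    show "prc M v < M"
    proof (cases v)
      case (Pre i)
      then have i: "i < ?N" using v unfolding VP_def by auto
      show ?thesis
      proof (cases "i = 0")
        case True then show ?thesis using Pre M by (simp add: prc_def)
      next
        case False
        have "i - 1 < (M - 1) * M" using i False M
          by (simp add: power2_eq_square algebra_simps diff_mult_distrib)
        then have "(i - 1) div M < M - 1" by (simp add: less_mult_imp_div_less)
        then show ?thesis using Pre False M by (simp add: prc_def)
      qed
    qed (use M in \<open>auto simp: prc_def\<close>)
  qed
  have critord: "\<And>i j. i < j \<Longrightarrow> sfn M d (Crit i) \<le> sst M d (Crit j)"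
  proof -
    fix i j :: nat assume ij: "i < j"
    show "sfn M d (Crit i) \<le> sst M d (Crit j)"
    proof (cases "i = 0")
      case True then show ?thesis using ij d by (simp add: sst_def sfn_def)
    next
      case False
      have "real i \<le> real j - 1" using ij by simp
      then have "real i * d \<le> (real j - 1) * d" using d by (simp add: mult_right_mono)
      then show ?thesis using ij False by (simp add: sst_def sfn_def)
    qed
  qed
  have disj: "\<And>u v. u \<in> VP M \<Longrightarrow> v \<in> VP M \<Longrightarrow> u \<noteq> v \<Longrightarrow>
                 prc M u = prc M v \<or> task_of u = task_of v \<Longrightarrow>
                 sfn M d u \<le> sst M d v \<or> sfn M d v \<le> sst M d u"
  proof -
    fix u v assume u: "u \<in> VP M" and v: "v \<in> VP M" and uv: "u \<noteq> v"
      and same: "prc M u = prc M v \<or> task_of u = task_of v"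
    have preX: "\<And>i. sfn M d (Pre i) \<le> real M + real ?n * d"
    proof -
      fix i :: nat
      have "real ((i - 1) mod M) + 1 \<le> real M"
        using modle by simp
      then show "sfn M d (Pre i) \<le> real M + real ?n * d" using M nge by (simp add: sfn_def)
    qed
    have critX: "\<And>j. j \<noteq> 0 \<Longrightarrow> real M + real ?n * d \<le> sst M d (Crit j)"
      using d by (simp add: sst_def)
    have pre0crit: "\<And>j. sfn M d (Pre 0) \<le> sst M d (Crit j)"
    proof -
      fix j :: nat
      show "sfn M d (Pre 0) \<le> sst M d (Crit j)"
      proof (cases "j = 0")
        case True then show ?thesis by (simp add: sst_def sfn_def)
      next
        case False
        then have "real j \<ge> 1" by simp
        then have "(real j - 1) * d \<ge> 0" using d by simp
        then show ?thesis using False Mr by (simp add: sst_def sfn_def)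
      qed
    qed
    show "sfn M d u \<le> sst M d v \<or> sfn M d v \<le> sst M d u"
    proof (cases u; cases v)
      fix i j assume ui: "u = Pre i" and vj: "v = Pre j"
      have ij: "i \<noteq> j" using uv ui vj by simp
      show ?thesis
      proof (cases "i = 0 \<or> j = 0")
        case True
        then have "prc M u \<noteq> prc M v" using ij ui vj by (auto simp: prc_def)
        then show ?thesis using same ui vj ij by simp
      next
        case False
        then have "(i - 1) div M = (j - 1) div M" using same ui vj ij by (simp add: prc_def)
        moreover have "i - 1 \<noteq> j - 1" using False ij by linarith
        ultimately have "(i - 1) mod M \<noteq> (j - 1) mod M" by (metis div_mult_mod_eq)
        then have "(i - 1) mod M + 1 \<le> (j - 1) mod M \<or> (j - 1) mod M + 1 \<le> (i - 1) mod M" by linarith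
        then have "real ((i - 1) mod M) + 1 \<le> real ((j - 1) mod M) \<or> real ((j - 1) mod M) + 1 \<le> real ((i - 1) mod M)"
          by (metis of_nat_1 of_nat_add of_nat_le_iff)
        then show ?thesis using False ui vj by (simp add: sst_def sfn_def)
      qed
    next
      fix i j assume ui: "u = Pre i" and vj: "v = Crit j"
      show ?thesis
      proof (cases "j = 0")
        case True
        then show ?thesis using ui vj pre0crit same by (cases "i = 0") (auto simp: prc_def sst_def sfn_def)
      next
        case False
        then show ?thesis using ui vj preX[of i] critX[of j] by auto
      qed
    next
      fix i j assume ui: "u = Pre i" and vj: "v = Post j"
      then show ?thesis using v unfolding VP_def by auto
    next
      fix i j assume ui: "u = Crit i" and vj: "v = Pre j"
      show ?thesis
      proof (cases "i = 0")
        case True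
        then show ?thesis using ui vj pre0crit same by (cases "j = 0") (auto simp: prc_def sst_def sfn_def)
      next
        case False
        then show ?thesis using ui vj preX[of j] critX[of i] by auto
      qed
    next
      fix i j assume ui: "u = Crit i" and vj: "v = Crit j"
      then have "i < j \<or> j < i" using uv by auto
      then show ?thesis using critord ui vj by auto
    next
      fix i j assume ui: "u = Crit i" and vj: "v = Post j"
      then show ?thesis using v unfolding VP_def by auto
    next
      fix i j assume "u = Post i"
      then show ?thesis using u unfolding VP_def by auto
    next
      fix i j assume "u = Post i"
      then show ?thesis using u unfolding VP_def by auto
    next
      fix i j assume "u = Post i"
      then show ?thesis using u unfolding VP_def by auto
    qed
  qed
  have VPsj: "VP M \<subseteq> subjobs ?T" unfolding VP_def sj by auto
  show ?thesis
    unfolding valid_schedule_def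
  proof (intro conjI)
    show "finite (pieces (S0 M d))" unfolding S0_def VP_def by simp
    show "\<forall>(v, p, a, b)\<in>pieces (S0 M d). v \<in> subjobs ?T \<and> p < M \<and> a < b \<and> sstart (S0 M d) v \<le> a \<and> b \<le> sfin (S0 M d) v"
      unfolding S0_def using VPsj prcM pos by auto
    show "\<forall>v\<in>subjobs ?T. 0 \<le> sstart (S0 M d) v \<and> sstart (S0 M d) v \<le> sfin (S0 M d) v"
      unfolding S0_def using nn by simp
    show "\<forall>v\<in>subjobs ?T. sum plen {x \<in> pieces (S0 M d). fst x = v} = wcet ?T v"
    proof
      fix v assume v: "v \<in> subjobs ?T"
      show "sum plen {x \<in> pieces (S0 M d). fst x = v} = wcet ?T v"
      proof (cases "v \<in> VP M")
        case True
        then have "{x \<in> pieces (S0 M d). fst x = v} = {(v, prc M v, sst M d v, sfn M d v)}"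
          unfolding S0_def by auto
        then show ?thesis using len[OF True] by simp
      next
        case False
        then have "{x \<in> pieces (S0 M d). fst x = v} = {}" unfolding S0_def by auto
        moreover have "wcet ?T v = 0" using False v unfolding sj VP_def by (auto simp: TT_simps)
        ultimately show ?thesis by (metis sum.empty)
      qed
    qed
    show "\<forall>(u, p, a, b)\<in>pieces (S0 M d). \<forall>(u', p', a', b')\<in>pieces (S0 M d).
            (u, p, a, b) \<noteq> (u', p', a', b') \<and> p = p' \<longrightarrow> time_disjoint (a, b) (a', b')"
      unfolding S0_def time_disjoint_def using disj by fastforce
    show "\<forall>(u, p, a, b)\<in>pieces (S0 M d). \<forall>(u', p', a', b')\<in>pieces (S0 M d).
            (u, p, a, b) \<noteq> (u', p', a', b') \<and> task_of u = task_of u' \<longrightarrow> time_disjoint (a, b) (a', b')"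
      unfolding S0_def time_disjoint_def using disj by fastforce
    show "\<forall>i<ntasks ?T. sfin (S0 M d) (Pre i) \<le> sstart (S0 M d) (Crit i) \<and>
            sfin (S0 M d) (Crit i) \<le> sstart (S0 M d) (Post i)"
    proof (intro allI impI conjI)
      fix i
      have "sfn M d (Pre i) \<le> sst M d (Crit i)"
      proof (cases "i = 0")
        case True then show ?thesis by (simp add: sst_def sfn_def)
      next
        case False
        have a: "real ((i - 1) mod M) + 1 \<le> real M" using modle by simp
        have "real i \<ge> 1" using False by simp
        then have b: "(real i - 1) * d \<ge> 0" using d by simp
        show ?thesis using False a b nge by (simp add: sst_def sfn_def)
      qed
      then show "sfin (S0 M d) (Pre i) \<le> sstart (S0 M d) (Crit i)" by (simp add: S0_def)
      show "sfin (S0 M d) (Crit i) \<le> sstart (S0 M d) (Post i)" by (simp add: S0_def sst_def sfn_def)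
    qed
    show "\<forall>i<ntasks ?T. \<forall>j<ntasks ?T. i \<noteq> j \<and> sema ?T i = sema ?T j \<longrightarrow>
        time_disjoint (sstart (S0 M d) (Crit i), sfin (S0 M d) (Crit i)) (sstart (S0 M d) (Crit j), sfin (S0 M d) (Crit j))"
    proof (intro allI impI)
      fix i j assume "i \<noteq> j \<and> sema ?T i = sema ?T j"
      then have "i < j \<or> j < i" by auto
      then show "time_disjoint (sstart (S0 M d) (Crit i), sfin (S0 M d) (Crit i)) (sstart (S0 M d) (Crit j), sfin (S0 M d) (Crit j))"
        using critord unfolding time_disjoint_def S0_def by auto
    qed
  qed
qed

lemma S0_makespan:
  assumes M: "M \<ge> 2" and d: "d > 0"
  shows "makespan (TT M d) (S0 M d) \<le> real M + 2 * real (M^2 - M) * d"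
  unfolding makespan_def
proof (subst Max_le_iff)
  show "finite ((\<lambda>i. sfin (S0 M d) (Post i)) ` {..<ntasks (TT M d)})" by simp
  have "0 \<in> {..<ntasks (TT M d)}" by (simp add: TT_simps)
  then show "(\<lambda>i. sfin (S0 M d) (Post i)) ` {..<ntasks (TT M d)} \<noteq> {}" by blast
  show "\<forall>a\<in>(\<lambda>i. sfin (S0 M d) (Post i)) ` {..<ntasks (TT M d)}. a \<le> real M + 2 * real (M^2 - M) * d"
  proof
    fix a assume "a \<in> (\<lambda>i. sfin (S0 M d) (Post i)) ` {..<ntasks (TT M d)}"
    then obtain i where i: "i < Suc (M^2 - M)" "a = sfn M d (Post i)" by (auto simp: TT_simps S0_def)
    have "real i \<le> real (M^2 - M)" using i by simp
    then have "real i * d \<le> real (M^2 - M) * d" using d by (simp add: mult_right_mono)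
    moreover have "a = real M + real (M^2 - M) * d + real i * d" using i by (simp add: sfn_def)
    ultimately show "a \<le> real M + 2 * real (M^2 - M) * d" by linarith
  qed
qed

lemma makespan_lb:
  assumes M: "M \<ge> 2" and d: "d \<ge> 0" and V: "valid_schedule (TT M d) M S"
  shows "makespan (TT M d) S \<ge> sstart S (Crit 0) + (real M - 1)" and "sstart S (Crit 0) \<ge> 0"
proof -
  let ?T = "TT M d"
  have N0: "0 < ntasks ?T" by (simp add: TT_simps)
  have sjs: "Post 0 \<in> subjobs ?T" "Crit 0 \<in> subjobs ?T" using N0 unfolding subjobs_def by auto
  have "makespan ?T S \<ge> sfin S (Post 0)"
    unfolding makespan_def by (rule Max_ge) (use N0 in auto)
  moreover have "sstart S (Post 0) \<le> sfin S (Post 0)" using vs_ss[OF V] sjs by blast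
  moreover have "sfin S (Crit 0) \<le> sstart S (Post 0)" using vs_seq[OF V] N0 by blast
  moreover have "wcet ?T (Crit 0) \<le> sfin S (Crit 0) - sstart S (Crit 0)" by (rule wcet_le[OF V sjs(2)])
  ultimately show "makespan ?T S \<ge> sstart S (Crit 0) + (real M - 1)" by (simp add: TT_simps)
  show "sstart S (Crit 0) \<ge> 0" using vs_ss[OF V] sjs by blast
qed

lemma sum_pre:
  assumes V: "valid_schedule T M S" and I: "I \<subseteq> {..<ntasks T}"
  shows "(\<Sum>i\<in>I. cpre T i) = sum plen {x \<in> pieces S. fst x \<in> Pre ` I}"
proof -
  have fI: "finite I" using I finite_subset by blast
  have "(\<Sum>i\<in>I. cpre T i) = (\<Sum>y\<in>Pre ` I. wcet T y)"
    by (simp add: sum.reindex inj_on_def)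
  also have "\<dots> = sum plen {x \<in> pieces S. fst x \<in> Pre ` I}"
    by (rule sum_wcet_pieces[OF V]) (use fI I in \<open>auto simp: subjobs_def\<close>)
  finally show ?thesis .
qed

lemma proc_window:
  assumes V: "valid_schedule T M S" and t: "0 \<le> t" and pre: "\<forall>i<ntasks T. sfin S (Pre i) \<le> t"
    and I: "I \<subseteq> {..<ntasks T}"
  shows "sum plen {x \<in> pieces S. fst x \<in> Pre ` I \<and> fst (snd x) = q} \<le> t"
proof -
  let ?Z = "{x \<in> pieces S. fst x \<in> Pre ` I \<and> fst (snd x) = q}"
  have H: "\<forall>(u,p,a,b) \<in> pieces S. u \<in> subjobs T \<and> p < M \<and> a < b \<and> sstart S u \<le> a \<and> b \<le> sfin S u"
    using vs_pc[OF V] by blast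
  have "sum plen ?Z \<le> t - 0"
  proof (rule pieces_sum_le[OF V])
    show "\<forall>(u,p,a,b)\<in>?Z. 0 \<le> a \<and> b \<le> t"
    proof (intro ballI)
      fix x assume x: "x \<in> ?Z"
      obtain u p a b where xe: "x = (u, p, a, b)" by (cases x) auto
      have xin: "(u, p, a, b) \<in> pieces S" using x xe by auto
      obtain i where i: "i \<in> I" "u = Pre i" using x xe by auto
      have iN: "i < ntasks T" using i I by auto
      have h: "sstart S u \<le> a \<and> b \<le> sfin S u" using bspec[OF H xin] by simp
      have "0 \<le> sstart S u" using vs_ss[OF V] iN i unfolding subjobs_def by auto
      moreover have "sfin S u \<le> t" using pre iN i by auto
      ultimately show "case x of (u, p, a, b) \<Rightarrow> 0 \<le> a \<and> b \<le> t" using xe h by simp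
    qed
    show "\<forall>x\<in>?Z. \<forall>y\<in>?Z. x \<noteq> y \<longrightarrow> time_disjoint (snd (snd x)) (snd (snd y))"
      using proc_disj[OF V] by auto
  qed (use t in auto)
  then show ?thesis by simp
qed

lemma global_work:
  assumes V: "valid_schedule T M S" and t: "0 \<le> t" and pre: "\<forall>i<ntasks T. sfin S (Pre i) \<le> t"
  shows "(\<Sum>i<ntasks T. cpre T i) \<le> real M * t"
proof -
  let ?W = "{x \<in> pieces S. fst x \<in> Pre ` {..<ntasks T}}"
  have fin: "finite (pieces S)" using vs_fin[OF V] .
  have H: "\<forall>(u,p,a,b) \<in> pieces S. u \<in> subjobs T \<and> p < M \<and> a < b \<and> sstart S u \<le> a \<and> b \<le> sfin S u"
    using vs_pc[OF V] by blast
  have img: "(\<lambda>x. fst (snd x)) ` ?W \<subseteq> {..<M}"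
  proof
    fix y assume "y \<in> (\<lambda>x. fst (snd x)) ` ?W"
    then obtain x where x: "x \<in> pieces S" "y = fst (snd x)" by auto
    obtain u p a b where xe: "x = (u, p, a, b)" by (cases x) auto
    show "y \<in> {..<M}" using bspec[OF H x(1)[unfolded xe]] x xe by simp
  qed
  have "(\<Sum>i<ntasks T. cpre T i) = sum plen ?W" by (rule sum_pre[OF V]) simp
  also have "\<dots> = (\<Sum>q\<in>{..<M}. sum plen {x. x \<in> ?W \<and> fst (snd x) = q})"
    by (rule sum.group[symmetric]) (use fin img in auto)
  also have "\<dots> \<le> (\<Sum>q\<in>{..<M}. t)"
  proof (rule sum_mono)
    fix q assume "q \<in> {..<M}"
    have "{x. x \<in> ?W \<and> fst (snd x) = q} = {x \<in> pieces S. fst x \<in> Pre ` {..<ntasks T} \<and> fst (snd x) = q}"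
      by auto
    then show "sum plen {x. x \<in> ?W \<and> fst (snd x) = q} \<le> t"
      using proc_window[OF V t pre, of "{..<ntasks T}" q] by simp
  qed
  also have "\<dots> = real M * t" by simp
  finally show ?thesis .
qed

lemma pigeon:
  fixes f :: "nat \<Rightarrow> nat"
  assumes f: "\<forall>i<N. f i < M" and N: "M * (M - 1) < N"
  shows "\<exists>q<M. M \<le> card {i \<in> {..<N}. f i = q}"
proof (rule ccontr)
  assume "\<not> ?thesis"
  then have c: "\<forall>q<M. card {i \<in> {..<N}. f i = q} \<le> M - 1" by auto
  have "N = card {..<N}" by simp
  also have "\<dots> = (\<Sum>x\<in>{..<N}. (1::nat))" by (rule card_eq_sum)
  also have "\<dots> = (\<Sum>q\<in>{..<M}. \<Sum>x\<in>{x. x \<in> {..<N} \<and> f x = q}. (1::nat))"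
    by (rule sum.group[symmetric]) (use f in auto)
  also have "\<dots> = (\<Sum>q\<in>{..<M}. card {i \<in> {..<N}. f i = q})"
    by simp
  also have "\<dots> \<le> (\<Sum>q\<in>{..<M}. M - 1)" by (rule sum_mono) (use c in auto)
  also have "\<dots> = M * (M - 1)" by simp
  finally show False using N by simp
qed

lemma semi_work:
  assumes V: "valid_schedule T M S" and SP: "semi_partitioned S" and t: "0 \<le> t"
    and pre: "\<forall>i<ntasks T. sfin S (Pre i) \<le> t"
    and c1: "\<forall>i<ntasks T. cpre T i \<ge> 1" and N: "M * (M - 1) < ntasks T"
  shows "real M \<le> t"
proof -
  let ?N = "ntasks T"
  define pr where "pr i = fst (snd (SOME x. x \<in> pieces S \<and> fst x = Pre i))" for i
  have H: "\<forall>(u,p,a,b) \<in> pieces S. u \<in> subjobs T \<and> p < M \<and> a < b \<and> sstart S u \<le> a \<and> b \<le> sfin S u"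
    using vs_pc[OF V] by blast
  have SP': "\<And>x y. x \<in> pieces S \<Longrightarrow> y \<in> pieces S \<Longrightarrow> fst x = fst y \<Longrightarrow> fst (snd x) = fst (snd y)"
  proof -
    fix x y assume xy: "x \<in> pieces S" "y \<in> pieces S" "fst x = fst y"
    obtain u p a b where xe: "x = (u, p, a, b)" by (cases x) auto
    obtain u' p' a' b' where ye: "y = (u', p', a', b')" by (cases y) auto
    have A: "\<forall>(u,p,a,b) \<in> pieces S. \<forall>(u',p',a',b') \<in> pieces S. u = u' \<longrightarrow> p = p'"
      using SP unfolding semi_partitioned_def .
    have B: "\<forall>(u',p',a',b') \<in> pieces S. u = u' \<longrightarrow> p = p'"
      using bspec[OF A xy(1)[unfolded xe]] by simp
    have C: "u = u' \<longrightarrow> p = p'"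
      using bspec[OF B xy(2)[unfolded ye]] by simp
    then show "fst (snd x) = fst (snd y)" using xy(3) unfolding xe ye by simp
  qed
  have prp: "\<And>i. i < ?N \<Longrightarrow> pr i < M \<and> (\<forall>x \<in> pieces S. fst x = Pre i \<longrightarrow> fst (snd x) = pr i)"
  proof -
    fix i assume i: "i < ?N"
    have sw: "sum plen {x \<in> pieces S. fst x = Pre i} = wcet T (Pre i)"
      using vs_sum[OF V] i unfolding subjobs_def by auto
    have ne: "{x \<in> pieces S. fst x = Pre i} \<noteq> {}"
    proof
      assume e: "{x \<in> pieces S. fst x = Pre i} = {}"
      have "sum plen {x \<in> pieces S. fst x = Pre i} = 0" unfolding e by simp
      moreover have "1 \<le> cpre T i" using c1 i by blast
      ultimately show False using sw by simp
    qed
    then have ex: "\<exists>x. x \<in> pieces S \<and> fst x = Pre i" by blast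
    let ?x0 = "SOME x. x \<in> pieces S \<and> fst x = Pre i"
    have x0: "?x0 \<in> pieces S" "fst ?x0 = Pre i" using someI_ex[OF ex] by auto
    obtain u p a b where xe: "?x0 = (u, p, a, b)" by (cases ?x0) auto
    have "pr i < M" using bspec[OF H x0(1)[unfolded xe]] xe unfolding pr_def by simp
    moreover have "\<forall>x \<in> pieces S. fst x = Pre i \<longrightarrow> fst (snd x) = pr i"
      using SP'[OF _ x0(1)] x0(2) unfolding pr_def by auto
    ultimately show "pr i < M \<and> (\<forall>x \<in> pieces S. fst x = Pre i \<longrightarrow> fst (snd x) = pr i)" by blast
  qed
  obtain q where q: "q < M" "M \<le> card {i \<in> {..<?N}. pr i = q}"
    using pigeon[of ?N pr M] prp N by auto
  let ?I = "{i \<in> {..<?N}. pr i = q}"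
  have IN: "?I \<subseteq> {..<?N}" by auto
  have "real M \<le> real (card ?I)" using q by simp
  also have "\<dots> = of_nat (card ?I) * 1" by simp
  also have "\<dots> \<le> (\<Sum>i\<in>?I. cpre T i)" by (rule sum_bounded_below) (use c1 in auto)
  also have "\<dots> = sum plen {x \<in> pieces S. fst x \<in> Pre ` ?I}" by (rule sum_pre[OF V IN])
  also have "{x \<in> pieces S. fst x \<in> Pre ` ?I} = {x \<in> pieces S. fst x \<in> Pre ` ?I \<and> fst (snd x) = q}"
    using prp by auto
  also have "sum plen \<dots> \<le> t" by (rule proc_window[OF V t pre IN])
  finally show ?thesis .
qed

lemma part_semi: "partitioned S \<Longrightarrow> semi_partitioned S"
  unfolding partitioned_def semi_partitioned_def
  by (simp add: Ball_def split_paired_all)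

lemma final_arith:
  fixes m e Op k L mk :: real
  assumes m: "m \<ge> 2" and e: "e > 0" and Op: "Op \<le> m + e / 2" and Opos: "Op > 0"
    and k2: "k \<le> 2" and km: "k * m \<le> L - e * m" and mk: "L \<le> mk" and mk0: "0 \<le> mk"
  shows "k * Op \<le> mk"
proof (cases "k \<le> 0")
  case True
  have "k * Op \<le> 0" using True Opos by (simp add: mult_nonpos_nonneg)
  then show ?thesis using mk0 by linarith
next
  case False
  have 1: "k * Op \<le> k * (m + e / 2)" using Op False by (simp add: mult_left_mono)
  have 2: "k * (e / 2) \<le> 2 * (e / 2)" using k2 e by (simp add: mult_right_mono)
  have 3: "1 * e \<le> m * e" using e m by (intro mult_right_mono) auto
  have "k * (m + e / 2) = k * m + k * (e / 2)" by (simp add: algebra_simps)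
  then show ?thesis using 1 2 3 km mk by (simp add: algebra_simps)
qed

theorem mainTheorem6:
  fixes M :: nat and \<epsilon> :: real
  assumes "M \<ge> 2" and "\<epsilon> > 0"
  shows "\<exists>T. valid_taskset T \<and> ntasks T = M^2 - M + 1 \<and>
           (\<forall>i < ntasks T. sema T i = 0) \<and> OPT T M > 0 \<and>
           (\<forall>G S. is_opt_dep_graph T G \<and> feasible_for_graph T M G S \<longrightarrow>
              makespan T S \<ge> (2 - 2 / real M + 1 / (real M)^2 - \<epsilon>) * OPT T M) \<and>
           (\<forall>G S. is_opt_dep_graph T G \<and> feasible_for_graph T M G S \<and>
                  (semi_partitioned S \<or> partitioned S) \<longrightarrow>
              makespan T S \<ge> (2 - 1 / real M - \<epsilon>) * OPT T M)"
proof -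
  have M: "M \<ge> 2" and e: "\<epsilon> > 0" using assms by auto
  let ?n = "M^2 - M"
  define d where "d = \<epsilon> / (4 * (real ?n + 1))"
  have d: "d > 0" using e unfolding d_def by simp
  have "4 * (real ?n + 1) * d = \<epsilon>" unfolding d_def by simp
  then have "4 * (real ?n * d) + 4 * d = \<epsilon>" by (simp add: algebra_simps)
  then have nd: "real ?n * d \<le> \<epsilon> / 4" using d by linarith
  let ?T = "TT M d"
  have Mr: "real M \<ge> 2" using M by simp
  have NT: "ntasks ?T = Suc ?n" by (simp add: TT_simps)
  let ?X = "makespan ?T ` {S. valid_schedule ?T M S}"
  have S0v: "valid_schedule ?T M (S0 M d)" by (rule S0_valid[OF M d])
  have lbX: "\<And>x. x \<in> ?X \<Longrightarrow> real M - 1 \<le> x"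
  proof -
    fix x assume "x \<in> ?X"
    then obtain S where S: "valid_schedule ?T M S" "x = makespan ?T S" by auto
    show "real M - 1 \<le> x" using makespan_lb[OF M _ S(1)] d S(2) by force
  qed
  have OPTle: "OPT ?T M \<le> real M + 2 * real ?n * d"
  proof -
    have bdd: "bdd_below ?X" by (rule bdd_belowI[of _ "real M - 1"]) (rule lbX)
    have mem: "makespan ?T (S0 M d) \<in> ?X" using S0v by blast
    have "OPT ?T M \<le> makespan ?T (S0 M d)"
      unfolding OPT_def by (rule cInf_lower[OF mem bdd])
    then show ?thesis using S0_makespan[OF M d] by linarith
  qed
  have OPTge: "real M - 1 \<le> OPT ?T M"
    unfolding OPT_def by (rule cInf_greatest) (use S0v lbX in auto)
  have Opos: "OPT ?T M > 0" using OPTge Mr by linarith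
  have Ole: "OPT ?T M \<le> real M + \<epsilon> / 2" using OPTle nd by linarith
  have common: "\<And>G S. is_opt_dep_graph ?T G \<Longrightarrow> feasible_for_graph ?T M G S \<Longrightarrow>
      valid_schedule ?T M S \<and> makespan ?T S \<ge> sstart S (Crit 0) + (real M - 1) \<and> sstart S (Crit 0) \<ge> 0
      \<and> (\<forall>i<ntasks ?T. sfin S (Pre i) \<le> sstart S (Crit 0))"
  proof -
    fix G S assume opt: "is_opt_dep_graph ?T G" and F: "feasible_for_graph ?T M G S"
    have V: "valid_schedule ?T M S" using F unfolding feasible_for_graph_def by blast
    show "valid_schedule ?T M S \<and> makespan ?T S \<ge> sstart S (Crit 0) + (real M - 1) \<and> sstart S (Crit 0) \<ge> 0
      \<and> (\<forall>i<ntasks ?T. sfin S (Pre i) \<le> sstart S (Crit 0))"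
      using V makespan_lb[OF M _ V] d pre_before[OF M d opt F] NT by auto
  qed
  have c1: "\<forall>i<ntasks ?T. cpre ?T i \<ge> 1" using d by (simp add: TT_simps)
  have NM: "M * (M - 1) < ntasks ?T"
  proof -
    have "M^2 - M = M * (M - 1)" by (simp add: power2_eq_square diff_mult_distrib2)
    then show ?thesis using NT by simp
  qed
  have nreal: "real ?n = real M * real M - real M"
  proof -
    have "M \<le> M^2" using M by (simp add: power2_eq_square)
    then show ?thesis by (simp add: of_nat_diff power2_eq_square)
  qed
  show ?thesis
  proof (intro exI[of _ ?T] conjI allI impI)
    show "valid_taskset ?T" using TT_valid[OF M] d by simp
    show "ntasks ?T = M^2 - M + 1" by (simp add: TT_def)
    show "\<And>i. i < ntasks ?T \<Longrightarrow> sema ?T i = 0" by (simp add: TT_simps)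
    show "OPT ?T M > 0" by (rule Opos)
  next
    fix G S assume a: "is_opt_dep_graph ?T G \<and> feasible_for_graph ?T M G S"
    let ?t = "sstart S (Crit 0)"
    have C: "valid_schedule ?T M S" "makespan ?T S \<ge> ?t + (real M - 1)" "?t \<ge> 0"
      "\<forall>i<ntasks ?T. sfin S (Pre i) \<le> ?t"
      using common[of G S] a by auto
    have "of_nat (card {..<ntasks ?T}) * 1 \<le> (\<Sum>i<ntasks ?T. cpre ?T i)"
      by (rule sum_bounded_below) (use c1 in auto)
    also have "\<dots> \<le> real M * ?t" by (rule global_work[OF C(1) C(3) C(4)])
    finally have Mt: "real ?n + 1 \<le> real M * ?t" using NT by simp
    have tge: "real M - 1 + 1 / real M \<le> ?t"
    proof -
      have "real M * (real M - 1 + 1 / real M) = real ?n + 1" unfolding nreal using Mr by (simp add: field_simps)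
      then have "real M * (real M - 1 + 1 / real M) \<le> real M * ?t" using Mt by simp
      then show ?thesis using Mr by simp
    qed
    let ?k = "2 - 2 / real M + 1 / (real M)^2 - \<epsilon>"
    have k2: "?k \<le> 2"
    proof -
      have "1 / (real M)^2 \<le> 2 / real M" using Mr by (simp add: field_simps power2_eq_square)
      then show ?thesis using e by linarith
    qed
    have km: "?k * real M = (2 * real M - 2 + 1 / real M) - \<epsilon> * real M"
      using Mr by (simp add: field_simps power2_eq_square)
    show "makespan ?T S \<ge> ?k * OPT ?T M"
      by (rule final_arith[OF Mr e Ole Opos k2, of "2 * real M - 2 + 1 / real M"]) (use km C tge Mr in linarith)+
  next
    fix G S assume a: "is_opt_dep_graph ?T G \<and> feasible_for_graph ?T M G S \<and> (semi_partitioned S \<or> partitioned S)"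
    let ?t = "sstart S (Crit 0)"
    have C: "valid_schedule ?T M S" "makespan ?T S \<ge> ?t + (real M - 1)" "?t \<ge> 0"
      "\<forall>i<ntasks ?T. sfin S (Pre i) \<le> ?t"
      using common[of G S] a by auto
    have SP: "semi_partitioned S" using a part_semi by blast
    have tge: "real M \<le> ?t" by (rule semi_work[OF C(1) SP C(3) C(4) c1 NM])
    let ?k = "2 - 1 / real M - \<epsilon>"
    have "0 \<le> 1 / real M" using Mr by simp
    then have k2: "?k \<le> 2" using e by linarith
    have km: "?k * real M = (2 * real M - 1) - \<epsilon> * real M"
      using Mr by (simp add: field_simps)
    show "makespan ?T S \<ge> ?k * OPT ?T M"
      by (rule final_arith[OF Mr e Ole Opos k2, of "2 * real M - 1"]) (use km C tge Mr in linarith)+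
  qed
qed

end
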